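(* Fix $i\in\{0,1\}$. Let $G$ be a connected graph with $n$ vertices and matching number $k$. If $2\le k<\lfloor n/2\rfloor$, then $\sigma_i(G)\le f_i(n,2k)$, with equality for every double-broom with $n$ vertices and diameter $2k$. If $k=\lfloor n/2\rfloor$, then $\sigma_i(G)\le\sigma_i(P_n)$, with equality if and only if $G=P_n$.
   Context: All graphs are finite, simple, undirected. For a connected graph $G$ and $u\in V(G)$, $\varepsilon_G(u)=\max_v d_G(u,v)$; $\sigma_0(G)=\frac1{|V(G)|}\sum_u\varepsilon_G(u)$, $\sigma_1(G)=\sum_u\varepsilon_G(u)^2$. The matching number is the maximum number of pairwise disjoint edges. $P_n$ is the path on $n$ vertices. A double-broom is a tree obtained from a path by attaching leaves to each of its two end vertices (possibly zero leaves). For integers $n>d\ge2$: $f_0(n,d)=d-\frac1n\lfloor d^2/4\rfloor$ and $f_1(n,d)=nd^2-\frac{5d}{12}(d^2-1)-\epsilon_d$, where $\epsilon_d=d/4$ if $d$ is even and $\epsilon_d=0$ if $d$ is odd (these are the values of $\sigma_0$, $\sigma_1$ on $n$-vertex double-brooms of diameter $d$). *)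

theory Defs
  imports Complex_Main "HOL-Library.Disjoint_Sets"
begin

definition simple_graph :: "'a set \<Rightarrow> 'a set set \<Rightarrow> bool" where
  "simple_graph V E \<longleftrightarrow> finite V \<and> (\<forall>e\<in>E. \<exists>u v. e = {u, v} \<and> u \<noteq> v \<and> u \<in> V \<and> v \<in> V)"

definition walk :: "'a set \<Rightarrow> 'a set set \<Rightarrow> 'a list \<Rightarrow> bool" where
  "walk V E xs \<longleftrightarrow> xs \<noteq> [] \<and> set xs \<subseteq> V \<and> (\<forall>j. Suc j < length xs \<longrightarrow> {xs ! j, xs ! Suc j} \<in> E)"

definition connected_graph :: "'a set \<Rightarrow> 'a set set \<Rightarrow> bool" where
  "connected_graph V E \<longleftrightarrow> simple_graph V E \<and> V \<noteq> {} \<and>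
     (\<forall>u\<in>V. \<forall>v\<in>V. \<exists>xs. walk V E xs \<and> hd xs = u \<and> last xs = v)"

definition gdist :: "'a set \<Rightarrow> 'a set set \<Rightarrow> 'a \<Rightarrow> 'a \<Rightarrow> nat" where
  "gdist V E u v = (LEAST m. \<exists>xs. walk V E xs \<and> hd xs = u \<and> last xs = v \<and> length xs = Suc m)"

definition ecc :: "'a set \<Rightarrow> 'a set set \<Rightarrow> 'a \<Rightarrow> nat" where
  "ecc V E u = Max (gdist V E u ` V)"

definition diameter :: "'a set \<Rightarrow> 'a set set \<Rightarrow> nat" where
  "diameter V E = Max (ecc V E ` V)"

definition sigma0 :: "'a set \<Rightarrow> 'a set set \<Rightarrow> real" where
  "sigma0 V E = (\<Sum>u\<in>V. real (ecc V E u)) / real (card V)"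

definition sigma1 :: "'a set \<Rightarrow> 'a set set \<Rightarrow> real" where
  "sigma1 V E = (\<Sum>u\<in>V. real (ecc V E u) ^ 2)"

definition sigma :: "nat \<Rightarrow> 'a set \<Rightarrow> 'a set set \<Rightarrow> real" where
  "sigma i V E = (if i = 0 then sigma0 V E else sigma1 V E)"

definition matching :: "'a set set \<Rightarrow> 'a set set \<Rightarrow> bool" where
  "matching E M \<longleftrightarrow> M \<subseteq> E \<and> disjoint M"

definition matching_number :: "'a set set \<Rightarrow> nat" where
  "matching_number E = Max (card ` {M. matching E M})"

definition path_V :: "nat \<Rightarrow> nat set" where
  "path_V n = {0..<n}"

definition path_E :: "nat \<Rightarrow> nat set set" where
  "path_E n = {{j, Suc j} | j. Suc j < n}"

definition graph_iso :: "'a set \<Rightarrow> 'a set set \<Rightarrow> 'b set \<Rightarrow> 'b set set \<Rightarrow> bool" where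
  "graph_iso V E V' E' \<longleftrightarrow> (\<exists>f. bij_betw f V V' \<and>
     (\<forall>u\<in>V. \<forall>v\<in>V. {u, v} \<in> E \<longleftrightarrow> {f u, f v} \<in> E'))"

definition double_broom :: "'a set \<Rightarrow> 'a set set \<Rightarrow> bool" where
  "double_broom V E \<longleftrightarrow> finite V \<and> (\<exists>ps A B. ps \<noteq> [] \<and> distinct ps \<and>
     A \<inter> set ps = {} \<and> B \<inter> set ps = {} \<and> A \<inter> B = {} \<and>
     V = set ps \<union> A \<union> B \<and>
     E = {{ps ! j, ps ! Suc j} | j. Suc j < length ps}
         \<union> {{hd ps, a} | a. a \<in> A} \<union> {{last ps, b} | b. b \<in> B})"

definition f0 :: "nat \<Rightarrow> nat \<Rightarrow> real" where
  "f0 n d = real d - real (d^2 div 4) / real n"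

definition eps_d :: "nat \<Rightarrow> real" where
  "eps_d d = (if even d then real d / 4 else 0)"

definition f1 :: "nat \<Rightarrow> nat \<Rightarrow> real" where
  "f1 n d = real n * real d ^ 2 - 5 * real d / 12 * (real d ^ 2 - 1) - eps_d d"

definition f :: "nat \<Rightarrow> nat \<Rightarrow> nat \<Rightarrow> real" where
  "f i n d = (if i = 0 then f0 n d else f1 n d)"

end

theory Submission
  imports Defs
begin



lemma walk_single: "walk V E [u] \<longleftrightarrow> u \<in> V"
  by (auto simp: walk_def)

lemma walk_edge: "walk V E xs \<Longrightarrow> Suc j < length xs \<Longrightarrow> {xs!j, xs!Suc j} \<in> E"
  by (auto simp: walk_def)

lemma walk_set: "walk V E xs \<Longrightarrow> x \<in> set xs \<Longrightarrow> x \<in> V"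
  by (auto simp: walk_def)

lemma walk_nth: "walk V E xs \<Longrightarrow> j < length xs \<Longrightarrow> xs!j \<in> V"
  by (auto simp: walk_def)

lemma walk_append:
  assumes "walk V E xs" "walk V E ys" "{last xs, hd ys} \<in> E"
  shows "walk V E (xs @ ys)"
  unfolding walk_def
proof (intro conjI allI impI)
  show "xs @ ys \<noteq> []" using assms by (auto simp: walk_def)
  show "set (xs @ ys) \<subseteq> V" using assms by (auto simp: walk_def)
  fix j assume j: "Suc j < length (xs @ ys)"
  have xne: "xs \<noteq> []" and yne: "ys \<noteq> []" using assms by (auto simp: walk_def)
  consider "Suc j < length xs" | "Suc j = length xs" | "length xs \<le> j" by linarith
  then show "{(xs @ ys) ! j, (xs @ ys) ! Suc j} \<in> E"
  proof cases
    case 1 then show ?thesis using assms(1) by (simp add: nth_append walk_def)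
  next
    case 2
    then have jj: "j = length xs - 1" by simp
    then have "(xs @ ys) ! j = last xs" using xne 2 by (simp add: nth_append last_conv_nth)
    moreover have "(xs @ ys) ! Suc j = hd ys" using 2 yne by (simp add: nth_append hd_conv_nth)
    ultimately show ?thesis using assms(3) by simp
  next
    case 3
    then have "(xs @ ys) ! j = ys ! (j - length xs)" "(xs @ ys) ! Suc j = ys ! Suc (j - length xs)"
      by (simp_all add: nth_append Suc_diff_le)
    moreover have "Suc (j - length xs) < length ys" using j 3 by auto
    ultimately show ?thesis using assms(2) by (simp add: walk_def)
  qed
qed

lemma walk_rev: assumes "walk V E xs" shows "walk V E (rev xs)"
  unfolding walk_def
proof (intro conjI allI impI)
  show "rev xs \<noteq> []" "set (rev xs) \<subseteq> V" using assms by (auto simp: walk_def)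
  fix j assume j: "Suc j < length (rev xs)"
  let ?m = "length xs - Suc (Suc j)"
  have "rev xs ! j = xs ! Suc ?m" "rev xs ! Suc j = xs ! ?m" using j
    by (simp_all add: rev_nth Suc_diff_Suc)
  moreover have "{xs ! ?m, xs ! Suc ?m} \<in> E" using assms j by (auto simp: walk_def)
  ultimately show "{rev xs ! j, rev xs ! Suc j} \<in> E" by (simp add: insert_commute)
qed

lemma walk_take: assumes "walk V E xs" "0 < i" shows "walk V E (take i xs)"
  using assms by (auto simp: walk_def dest: in_set_takeD)

lemma walk_drop: assumes "walk V E xs" "i < length xs" shows "walk V E (drop i xs)"
  using assms unfolding walk_def
proof (intro conjI allI impI)
  fix j assume a: "xs \<noteq> [] \<and> set xs \<subseteq> V \<and> (\<forall>j. Suc j < length xs \<longrightarrow> {xs ! j, xs ! Suc j} \<in> E)" "i < length xs"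
    "Suc j < length (drop i xs)"
  then have "Suc (i + j) < length xs" by simp
  then have "{xs ! (i + j), xs ! Suc (i + j)} \<in> E" using a(1) by blast
  then show "{drop i xs ! j, drop i xs ! Suc j} \<in> E" using a by simp
qed (auto dest: in_set_dropD)

definition wle :: "'a set \<Rightarrow> 'a set set \<Rightarrow> 'a \<Rightarrow> 'a \<Rightarrow> nat \<Rightarrow> bool" where
  "wle V E u v m \<longleftrightarrow> (\<exists>xs. walk V E xs \<and> hd xs = u \<and> last xs = v \<and> length xs \<le> Suc m)"

lemma wleI: "walk V E xs \<Longrightarrow> hd xs = u \<Longrightarrow> last xs = v \<Longrightarrow> length xs \<le> Suc m \<Longrightarrow> wle V E u v m"
  unfolding wle_def by (rule exI[of _ xs]) simp

lemma wle_refl: "u \<in> V \<Longrightarrow> wle V E u u 0"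
  unfolding wle_def by (rule exI[of _ "[u]"]) (simp add: walk_single)

lemma wle_edge: "{u, v} \<in> E \<Longrightarrow> u \<in> V \<Longrightarrow> v \<in> V \<Longrightarrow> wle V E u v 1"
  unfolding wle_def by (rule exI[of _ "[u,v]"]) (auto simp: walk_def less_Suc_eq)

lemma wle_mono: "wle V E u v a \<Longrightarrow> a \<le> b \<Longrightarrow> wle V E u v b"
  unfolding wle_def by force

lemma wle_sym: assumes "wle V E u v a" shows "wle V E v u a"
proof -
  obtain xs where xs: "walk V E xs" "hd xs = u" "last xs = v" "length xs \<le> Suc a" using assms unfolding wle_def by blast
  have ne: "xs \<noteq> []" using xs by (simp add: walk_def)
  show ?thesis unfolding wle_def by (rule exI[of _ "rev xs"]) (use xs ne walk_rev in \<open>auto simp: hd_rev last_rev\<close>)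
qed

lemma wle_trans:
  assumes "wle V E u v a" "wle V E v w b" shows "wle V E u w (a + b)"
proof -
  obtain xs where xs: "walk V E xs" "hd xs = u" "last xs = v" "length xs \<le> Suc a"
    using assms(1) by (auto simp: wle_def)
  obtain ys where ys: "walk V E ys" "hd ys = v" "last ys = w" "length ys \<le> Suc b"
    using assms(2) by (auto simp: wle_def)
  have xne: "xs \<noteq> []" and yne: "ys \<noteq> []" using xs ys by (auto simp: walk_def)
  show ?thesis
  proof (cases "length ys = 1")
    case True
    then have "w = v" using ys yne by (cases ys) auto
    then show ?thesis using xs unfolding wle_def by (intro exI[of _ xs]) auto
  next
    case False
    then have l: "1 < length ys" using yne by (cases ys) auto
    have "walk V E (drop 1 ys)" using walk_drop[OF ys(1) l] .
    moreover have "{last xs, hd (drop 1 ys)} \<in> E"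
      using walk_edge[OF ys(1), of 0] l xs(3) ys(2) yne by (simp add: hd_drop_conv_nth hd_conv_nth)
    ultimately have w1: "walk V E (xs @ drop 1 ys)" using walk_append xs(1) by blast
    have w2: "hd (xs @ drop 1 ys) = u" using xs xne by simp
    have w3: "last (xs @ drop 1 ys) = w" using ys l by (simp add: last_drop)
    have w4: "length (xs @ drop 1 ys) \<le> Suc (a + b)" using xs ys by simp
    show ?thesis unfolding wle_def by (rule exI[of _ "xs @ drop 1 ys"]) (intro conjI w1 w2 w3 w4)
  qed
qed

lemma gdist_le: assumes "wle V E u v m" shows "gdist V E u v \<le> m"
proof -
  obtain xs where xs: "walk V E xs" "hd xs = u" "last xs = v" "length xs \<le> Suc m"
    using assms by (auto simp: wle_def)
  have ne: "xs \<noteq> []" using xs by (auto simp: walk_def)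
  then have "length xs = Suc (length xs - 1)" by simp
  then have "gdist V E u v \<le> length xs - 1" unfolding gdist_def
    using xs by (intro Least_le) blast
  then show ?thesis using xs by simp
qed

lemma gdist_ex: assumes "wle V E u v m"
  shows "\<exists>xs. walk V E xs \<and> hd xs = u \<and> last xs = v \<and> length xs = Suc (gdist V E u v)"
proof -
  obtain xs where xs: "walk V E xs" "hd xs = u" "last xs = v" "length xs \<le> Suc m"
    using assms by (auto simp: wle_def)
  have ne: "xs \<noteq> []" using xs by (auto simp: walk_def)
  then have "length xs = Suc (length xs - 1)" by simp
  then have "\<exists>m xs. walk V E xs \<and> hd xs = u \<and> last xs = v \<and> length xs = Suc m" using xs by blast
  then show ?thesis unfolding gdist_def by (rule LeastI_ex)
qed

lemma gdist_wle: "wle V E u v m \<Longrightarrow> wle V E u v (gdist V E u v)"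
  using gdist_ex unfolding wle_def by fastforce

lemma gdist_ge:
  assumes "wle V E u v m" "\<And>xs. walk V E xs \<Longrightarrow> hd xs = u \<Longrightarrow> last xs = v \<Longrightarrow> X < length xs"
  shows "X \<le> gdist V E u v"
  using gdist_ex[OF assms(1)] assms(2) by fastforce

lemma gdist_sym: "wle V E u v m \<Longrightarrow> gdist V E u v = gdist V E v u"
proof -
  assume a: "wle V E u v m"
  have b: "wle V E v u m" using wle_sym[OF a] .
  show ?thesis
  proof (rule antisym)
    show "gdist V E u v \<le> gdist V E v u" by (rule gdist_le[OF wle_sym[OF gdist_wle[OF b]]])
    show "gdist V E v u \<le> gdist V E u v" by (rule gdist_le[OF wle_sym[OF gdist_wle[OF a]]])
  qed
qed

lemma conn_wle: "connected_graph V E \<Longrightarrow> u \<in> V \<Longrightarrow> v \<in> V \<Longrightarrow> \<exists>m. wle V E u v m"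
proof -
  assume "connected_graph V E" "u \<in> V" "v \<in> V"
  then obtain xs where "walk V E xs" "hd xs = u" "last xs = v" unfolding connected_graph_def by blast
  then show ?thesis unfolding wle_def by (intro exI[of _ "length xs"]) auto
qed




lemma ecc_ge: "finite V \<Longrightarrow> v \<in> V \<Longrightarrow> gdist V E u v \<le> ecc V E u"
  unfolding ecc_def by (rule Max_ge) auto

lemma ecc_le: "finite V \<Longrightarrow> V \<noteq> {} \<Longrightarrow> (\<And>v. v \<in> V \<Longrightarrow> gdist V E u v \<le> B) \<Longrightarrow> ecc V E u \<le> B"
  unfolding ecc_def by (subst Max_le_iff) auto

lemma wle_seg: assumes "walk V E P" "a \<le> b" "b < length P"
  shows "wle V E (P!a) (P!b) (b - a)"
proof -
  let ?Q = "drop a (take (Suc b) P)"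
  have w: "walk V E ?Q" using walk_drop[OF walk_take[OF assms(1), of "Suc b"]] assms by simp
  have "hd ?Q = P!a" using assms by (simp add: hd_drop_conv_nth)
  moreover have "last ?Q = P!b" using assms by (simp add: last_conv_nth)
  moreover have "length ?Q \<le> Suc (b - a)" using assms by simp
  ultimately show ?thesis using w by (intro wleI)
qed

lemma wle_seg': assumes "walk V E P" "a < length P" "b < length P"
  shows "wle V E (P!a) (P!b) (if a \<le> b then b - a else a - b)"
proof (cases "a \<le> b")
  case True then show ?thesis using wle_seg[OF assms(1) True assms(3)] by simp
next
  case False then have "b \<le> a" by simp
  from wle_sym[OF wle_seg[OF assms(1) this assms(2)]] show ?thesis using False by simp
qed

lemma short_distinct:
  assumes "wle V E u v m"
  shows "\<exists>xs. walk V E xs \<and> hd xs = u \<and> last xs = v \<and> length xs = Suc (gdist V E u v) \<and> distinct xs"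
proof -
  obtain xs where xs: "walk V E xs" "hd xs = u" "last xs = v" "length xs = Suc (gdist V E u v)"
    using gdist_ex[OF assms] by blast
  have ne: "xs \<noteq> []" using xs by (simp add: walk_def)
  have "distinct xs"
  proof (rule ccontr)
    assume "\<not> distinct xs"
    then obtain i0 j0 where ij0: "i0 < length xs" "j0 < length xs" "i0 \<noteq> j0" "xs!i0 = xs!j0"
      by (auto simp: distinct_conv_nth)
    define i where "i = min i0 j0"
    define j where "j = max i0 j0"
    have ij: "i < j" "j < length xs" "xs!i = xs!j" using ij0 unfolding i_def j_def by (auto simp: min_def max_def)
    let ?ys = "take i xs @ drop j xs"
    have wy: "walk V E ?ys"
    proof (cases "i = 0")
      case True then show ?thesis using walk_drop[OF xs(1) ij(2)] by simp
    next
      case False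
      have "last (take i xs) = xs!(i - 1)" using False ij by (subst last_conv_nth) auto
      then have "{last (take i xs), hd (drop j xs)} = {xs!(i - 1), xs!(Suc (i - 1))}"
        using False ij by (simp add: hd_drop_conv_nth)
      moreover have "{xs!(i - 1), xs!(Suc (i - 1))} \<in> E" using walk_edge[OF xs(1), of "i - 1"] False ij by simp
      ultimately show ?thesis using walk_append[OF walk_take[OF xs(1)] walk_drop[OF xs(1) ij(2)]] False by simp
    qed
    have "hd ?ys = u"
    proof (cases "i = 0")
      case True then show ?thesis using ij xs ne by (simp add: hd_drop_conv_nth hd_conv_nth)
    next
      case False then show ?thesis using ij xs ne by simp
    qed
    moreover have "last ?ys = v" using ij xs by simp
    moreover have "length ?ys \<le> Suc (gdist V E u v - (j - i))" using ij xs by simp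
    ultimately have "wle V E u v (gdist V E u v - (j - i))" using wy by (intro wleI)
    then have "gdist V E u v \<le> gdist V E u v - (j - i)" by (rule gdist_le)
    moreover have "j - i \<le> gdist V E u v" using ij xs by simp
    ultimately show False using ij by simp
  qed
  then show ?thesis using xs by blast
qed



definition longest :: "'a set \<Rightarrow> 'a set set \<Rightarrow> 'a list \<Rightarrow> bool" where
  "longest V E P \<longleftrightarrow> walk V E P \<and> distinct P \<and> (\<forall>Q. walk V E Q \<and> distinct Q \<longrightarrow> length Q \<le> length P)"

lemma distinct_walk_len: "finite V \<Longrightarrow> walk V E Q \<Longrightarrow> distinct Q \<Longrightarrow> length Q \<le> card V"
proof -
  assume a: "finite V" "walk V E Q" "distinct Q"
  have "set Q \<subseteq> V" using a(2) by (simp add: walk_def)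
  then have "card (set Q) \<le> card V" using a(1) by (rule card_mono[rotated])
  then show ?thesis using distinct_card[OF a(3)] by simp
qed

lemma longest_exists:
  assumes "finite V" "V \<noteq> {}" shows "\<exists>P. longest V E P"
proof -
  let ?S = "{Q. walk V E Q \<and> distinct Q}"
  have fin: "finite (length ` ?S)"
    by (rule finite_subset[of _ "{..card V}"]) (use distinct_walk_len[OF assms(1)] in auto)
  obtain u where "u \<in> V" using assms by blast
  then have "[u] \<in> ?S" by (simp add: walk_single)
  then have ne: "length ` ?S \<noteq> {}" by blast
  obtain P where P: "P \<in> ?S" "length P = Max (length ` ?S)" using Max_in[OF fin ne] by auto
  have "\<forall>Q\<in>?S. length Q \<le> length P" using P(2) Max_ge[OF fin] by auto
  then show ?thesis using P(1) unfolding longest_def by blast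
qed

lemma longest_rev: "longest V E P \<Longrightarrow> longest V E (rev P)"
  unfolding longest_def using walk_rev by auto



lemma nearest_le:
  assumes L: "longest V E P" and conn: "connected_graph V E" and v: "v \<in> V"
    and i: "i < length P" and mn: "\<And>x. x \<in> set P \<Longrightarrow> gdist V E v (P!i) \<le> gdist V E v x"
  shows "gdist V E v (P!i) \<le> i"
proof -
  have wP: "walk V E P" and dP: "distinct P" and mx: "\<And>Q. walk V E Q \<Longrightarrow> distinct Q \<Longrightarrow> length Q \<le> length P"
    using L unfolding longest_def by auto
  have Pi: "P!i \<in> V" using walk_nth[OF wP i] .
  obtain m where "wle V E v (P!i) m" using conn_wle[OF conn v Pi] by blast
  then obtain Q where Q: "walk V E Q" "hd Q = v" "last Q = P!i" "length Q = Suc (gdist V E v (P!i))" "distinct Q"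
    using short_distinct[OF \<open>wle V E v (P!i) m\<close>] by blast
  define d where "d = gdist V E v (P!i)"
  have Qne: "Q \<noteq> []" using Q by (simp add: walk_def)
  have A: "Q!p \<notin> set P" if p: "p < d" for p
  proof
    assume inP: "Q!p \<in> set P"
    let ?T = "take (Suc p) Q"
    have "walk V E ?T" using walk_take[OF Q(1)] by simp
    moreover have "hd ?T = v" using Q Qne by simp
    moreover have "last ?T = Q!p" using p Q(4) d_def by (simp add: take_Suc_conv_app_nth)
    moreover have "length ?T \<le> Suc p" by simp
    ultimately have "wle V E v (Q!p) p" by (intro wleI)
    then have "gdist V E v (Q!p) \<le> p" by (rule gdist_le)
    with mn[OF inP] p d_def show False by simp
  qed
  show ?thesis
  proof (cases "Suc i = length P")
    case True
    have "length Q \<le> length P" using mx Q by blast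
    then show ?thesis using True Q(4) by simp
  next
    case False
    then have si: "Suc i < length P" using i by simp
    let ?R = "Q @ drop (Suc i) P"
    have "{last Q, hd (drop (Suc i) P)} \<in> E" using Q(3) walk_edge[OF wP si] si by (simp add: hd_drop_conv_nth)
    then have wR: "walk V E ?R" using walk_append[OF Q(1) walk_drop[OF wP si]] by simp
    have "set Q \<inter> set (drop (Suc i) P) = {}"
    proof (rule ccontr)
      assume "set Q \<inter> set (drop (Suc i) P) \<noteq> {}"
      then obtain y where y1: "y \<in> set Q" and y2: "y \<in> set (drop (Suc i) P)" by blast
      obtain p where p: "p < length Q" "Q!p = y" using y1 by (auto simp: in_set_conv_nth)
      obtain q where q: "q < length P - Suc i" "P ! (Suc i + q) = y" using y2 by (auto simp: in_set_conv_nth)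
      have yP: "y \<in> set P" using y2 by (meson in_set_dropD)
      show False
      proof (cases "p < d")
        case True then show False using A yP p by blast
      next
        case False
        then have "p = d" using p Q(4) d_def by simp
        then have "y = P!i" using p Q(3,4) d_def Qne by (simp add: last_conv_nth)
        then have "P!i = P!(Suc i + q)" using q by simp
        moreover have "Suc i + q < length P" using q by simp
        ultimately show False using dP i by (simp add: nth_eq_iff_index_eq)
      qed
    qed
    then have "distinct ?R" using Q(5) dP by simp
    then have "length ?R \<le> length P" using mx wR by blast
    then show ?thesis using Q(4) si by simp
  qed
qed

lemma longest_ecc_path:
  assumes L: "longest V E P" and conn: "connected_graph V E" and j: "j < length P"
  shows "ecc V E (P!j) \<le> max j (length P - 1 - j)"
proof -
  have wP: "walk V E P" and dP: "distinct P" using L unfolding longest_def by auto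
  have fin: "finite V" and Vne: "V \<noteq> {}" using conn unfolding connected_graph_def simple_graph_def by auto
  show ?thesis
  proof (rule ecc_le[OF fin Vne])
    fix v assume v: "v \<in> V"
    have Pne: "set P \<noteq> {}" using j by auto
    let ?m = "Min (gdist V E v ` set P)"
    have "?m \<in> gdist V E v ` set P" by (rule Min_in) (use Pne in auto)
    then obtain x where x: "x \<in> set P" "gdist V E v x = ?m" by auto
    obtain i where i: "i < length P" "P!i = x" using x(1) by (auto simp: in_set_conv_nth)
    have mn: "gdist V E v (P!i) \<le> gdist V E v y" if "y \<in> set P" for y
      using that x i by simp
    have d1: "gdist V E v (P!i) \<le> i" by (rule nearest_le[OF L conn v i(1) mn])
    have ri: "rev P ! (length P - 1 - i) = P!i" using i by (simp add: rev_nth)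
    have ri2: "length P - 1 - i < length (rev P)" using i by simp
    have "gdist V E v (rev P ! (length P - 1 - i)) \<le> length P - 1 - i"
      by (rule nearest_le[OF longest_rev[OF L] conn v ri2]) (unfold ri, use mn in simp)
    then have d2: "gdist V E v (P!i) \<le> length P - 1 - i" using ri by simp
    have Pi: "P!i \<in> V" using walk_nth[OF wP i(1)] .
    obtain m where "wle V E v (P!i) m" using conn_wle[OF conn v Pi] by blast
    then have w1: "wle V E (P!i) v (gdist V E v (P!i))" by (rule wle_sym[OF gdist_wle])
    have w2: "wle V E (P!j) (P!i) (if j \<le> i then i - j else j - i)" by (rule wle_seg'[OF wP j i(1)])
    have "gdist V E (P!j) v \<le> (if j \<le> i then i - j else j - i) + gdist V E v (P!i)"
      by (rule gdist_le[OF wle_trans[OF w2 w1]])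
    then show "gdist V E (P!j) v \<le> max j (length P - 1 - j)" using d1 d2 i j by (auto split: if_splits)
  qed
qed

lemma longest_ecc_all:
  assumes L: "longest V E P" and conn: "connected_graph V E" and u: "u \<in> V"
  shows "ecc V E u \<le> length P - 1"
proof -
  have fin: "finite V" and Vne: "V \<noteq> {}" using conn unfolding connected_graph_def simple_graph_def by auto
  show ?thesis
  proof (rule ecc_le[OF fin Vne])
    fix v assume v: "v \<in> V"
    obtain m where "wle V E u v m" using conn_wle[OF conn u v] by blast
    then obtain Q where Q: "walk V E Q" "hd Q = u" "last Q = v" "length Q = Suc (gdist V E u v)" "distinct Q"
      using short_distinct[OF \<open>wle V E u v m\<close>] by blast
    then have "length Q \<le> length P" using L unfolding longest_def by blast
    then show "gdist V E u v \<le> length P - 1" using Q(4) by simp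
  qed
qed

lemma matching_lower:
  assumes wP: "walk V E P" and dP: "distinct P" and len: "2 * m \<le> length P" and finE: "finite E"
  shows "m \<le> matching_number E"
proof -
  define M where "M = (\<lambda>s. {P!(2*s), P!(2*s+1)}) ` {..<m}"
  have sub: "M \<subseteq> E" unfolding M_def using walk_edge[OF wP] len by auto
  have inj: "inj_on (\<lambda>s. {P!(2*s), P!(2*s+1)}) {..<m}"
  proof (rule inj_onI)
    fix s t assume st: "s \<in> {..<m}" "t \<in> {..<m}" "{P!(2*s), P!(2*s+1)} = {P!(2*t), P!(2*t+1)}"
    then have "P!(2*s) = P!(2*t) \<or> P!(2*s) = P!(2*t+1)" by auto
    then have "2*s = 2*t \<or> 2*s = 2*t+1" using st len dP by (auto simp: nth_eq_iff_index_eq)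
    then show "s = t" by presburger
  qed
  have disj: "disjoint M" unfolding M_def
  proof (rule pairwiseI)
    fix x y assume "x \<in> (\<lambda>s. {P!(2*s), P!(2*s+1)}) ` {..<m}" "y \<in> (\<lambda>s. {P!(2*s), P!(2*s+1)}) ` {..<m}" "x \<noteq> y"
    then obtain s t where st: "s < m" "t < m" "x = {P!(2*s), P!(2*s+1)}" "y = {P!(2*t), P!(2*t+1)}" "s \<noteq> t" by auto
    have neq: "P!a \<noteq> P!b" if "a < length P" "b < length P" "a \<noteq> b" for a b
      using that dP by (simp add: nth_eq_iff_index_eq)
    have l: "2*s+1 < length P" "2*t+1 < length P" using st len by auto
    have n1: "P!(2*s) \<noteq> P!(2*t)" by (rule neq) (use l st in auto)
    have n2: "P!(2*s+1) \<noteq> P!(2*t)" by (rule neq) (use l st in auto)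
    have n3: "P!(2*s) \<noteq> P!(2*t+1)" by (rule neq) (use l st in auto)
    have n4: "P!(2*s+1) \<noteq> P!(2*t+1)" by (rule neq) (use l st in auto)
    show "disjnt x y" unfolding disjnt_def st(3,4) using n1 n2 n3 n4 by blast
  qed
  have cardM: "card M = m" unfolding M_def using card_image[OF inj] by simp
  have fin: "finite (card ` {M. matching E M})"
    by (rule finite_imageI, rule finite_subset[of _ "Pow E"]) (use finE in \<open>auto simp: matching_def\<close>)
  have "m \<in> card ` {M. matching E M}" using sub disj cardM unfolding matching_def by blast
  then show ?thesis unfolding matching_number_def using Max_ge[OF fin] by blast
qed

lemma finite_E: "simple_graph V E \<Longrightarrow> finite E"
proof -
  assume sg: "simple_graph V E"
  then have "E \<subseteq> Pow V" unfolding simple_graph_def by auto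
  moreover have "finite V" using sg unfolding simple_graph_def by auto
  ultimately show "finite E" using finite_subset by blast
qed




definition Fh :: "(nat \<Rightarrow> nat) \<Rightarrow> nat \<Rightarrow> nat \<Rightarrow> nat" where
  "Fh h n L = (\<Sum>j\<le>L. h (max j (L - j))) + (n - Suc L) * h L"

lemma sum_split_core:
  assumes fin: "finite V" and inj: "inj_on c {..L}" and cV: "c ` {..L} \<subseteq> V"
  shows "(\<Sum>u\<in>V. g u) = (\<Sum>j\<le>L. g (c j)) + (\<Sum>u\<in>V - c ` {..L}. g u)"
    and "card (V - c ` {..L}) = card V - Suc L"
proof -
  have "(\<Sum>u\<in>V. g u) = (\<Sum>u\<in>V - c ` {..L}. g u) + (\<Sum>u\<in>c ` {..L}. g u)"
    by (rule sum.subset_diff[OF cV fin])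
  moreover have "(\<Sum>u\<in>c ` {..L}. g u) = (\<Sum>j\<le>L. g (c j))" by (rule sum.reindex_cong[OF inj]) auto
  ultimately show "(\<Sum>u\<in>V. g u) = (\<Sum>j\<le>L. g (c j)) + (\<Sum>u\<in>V - c ` {..L}. g u)" by (simp add: ac_simps)
  have "card (c ` {..L}) = Suc L" using card_image[OF inj] by simp
  then show "card (V - c ` {..L}) = card V - Suc L" using card_Diff_subset[OF finite_subset[OF cV fin] cV] by simp
qed

lemma sum_profile_le:
  assumes fin: "finite V" and inj: "inj_on c {..L}" and cV: "c ` {..L} \<subseteq> V" and mono: "mono h"
    and core: "\<And>j. j \<le> L \<Longrightarrow> e (c j) \<le> max j (L - j)" and rest: "\<And>u. u \<in> V \<Longrightarrow> e u \<le> L"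
  shows "(\<Sum>u\<in>V. h (e u)) \<le> Fh h (card V) L"
proof -
  note sp = sum_split_core(1)[OF fin inj cV, of "\<lambda>u. h (e u)"] sum_split_core(2)[OF fin inj cV]
  have "(\<Sum>j\<le>L. h (e (c j))) \<le> (\<Sum>j\<le>L. h (max j (L - j)))"
    by (rule sum_mono) (use core mono in \<open>auto simp: monoD\<close>)
  moreover have "(\<Sum>u\<in>V - c ` {..L}. h (e u)) \<le> card (V - c ` {..L}) * h L"
    using sum_bounded_above[of "V - c ` {..L}" "\<lambda>u. h (e u)" "h L"] rest mono by (auto simp: monoD)
  ultimately show ?thesis unfolding Fh_def using sp by simp
qed

lemma sum_profile_less:
  assumes fin: "finite V" and inj: "inj_on c {..L}" and cV: "c ` {..L} \<subseteq> V" and mono: "strict_mono h"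
    and core: "\<And>j. j \<le> L \<Longrightarrow> e (c j) \<le> max j (L - j)" and rest: "\<And>u. u \<in> V \<Longrightarrow> e u \<le> L"
    and j0: "j0 \<le> L" "e (c j0) < max j0 (L - j0)"
  shows "(\<Sum>u\<in>V. h (e u)) < Fh h (card V) L"
proof -
  have mono': "mono h" using mono by (simp add: strict_mono_mono)
  note sp = sum_split_core(1)[OF fin inj cV, of "\<lambda>u. h (e u)"] sum_split_core(2)[OF fin inj cV]
  have "(\<Sum>j\<le>L. h (e (c j))) < (\<Sum>j\<le>L. h (max j (L - j)))"
    by (rule sum_strict_mono_ex1) (use core mono' j0 mono in \<open>auto simp: monoD strict_mono_less\<close>)
  moreover have "(\<Sum>u\<in>V - c ` {..L}. h (e u)) \<le> card (V - c ` {..L}) * h L"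
    using sum_bounded_above[of "V - c ` {..L}" "\<lambda>u. h (e u)" "h L"] rest mono' by (auto simp: monoD)
  ultimately show ?thesis unfolding Fh_def using sp by simp
qed

lemma sum_profile_eq:
  assumes fin: "finite V" and inj: "inj_on c {..L}" and cV: "c ` {..L} \<subseteq> V"
    and core: "\<And>j. j \<le> L \<Longrightarrow> e (c j) = max j (L - j)" and rest: "\<And>u. u \<in> V \<Longrightarrow> u \<notin> c ` {..L} \<Longrightarrow> e u = L"
  shows "(\<Sum>u\<in>V. h (e u)) = Fh h (card V) L"
proof -
  note sp = sum_split_core(1)[OF fin inj cV, of "\<lambda>u. h (e u)"] sum_split_core(2)[OF fin inj cV]
  have "(\<Sum>j\<le>L. h (e (c j))) = (\<Sum>j\<le>L. h (max j (L - j)))" using core by simp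
  moreover have "(\<Sum>u\<in>V - c ` {..L}. h (e u)) = card (V - c ` {..L}) * h L"
    using rest by simp
  ultimately show ?thesis unfolding Fh_def using sp by simp
qed

lemma Fh_step:
  assumes mono: "mono h" and n: "Suc (Suc L) \<le> n"
  shows "Fh h n L \<le> Fh h n (Suc L)"
proof -
  have a: "(\<Sum>j\<le>L. h (max j (L - j))) \<le> (\<Sum>j\<le>L. h (max j (Suc L - j)))"
    by (rule sum_mono) (use mono in \<open>auto simp: monoD\<close>)
  have b: "h L \<le> h (Suc L)" using mono by (simp add: monoD)
  have "n - Suc L = Suc (n - Suc (Suc L))" using n by simp
  then have "Fh h n L = (\<Sum>j\<le>L. h (max j (L - j))) + h L + (n - Suc (Suc L)) * h L"
    unfolding Fh_def by simp
  moreover have "Fh h n (Suc L) = (\<Sum>j\<le>L. h (max j (Suc L - j))) + h (Suc L) + (n - Suc (Suc L)) * h (Suc L)"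
    unfolding Fh_def by simp
  moreover have "(n - Suc (Suc L)) * h L \<le> (n - Suc (Suc L)) * h (Suc L)" using b by simp
  ultimately show ?thesis using a b by linarith
qed

lemma Fh_step_strict:
  assumes mono: "strict_mono h" and n: "Suc (Suc L) \<le> n"
  shows "Fh h n L < Fh h n (Suc L)"
proof -
  have mono': "mono h" using mono by (simp add: strict_mono_mono)
  have a: "(\<Sum>j\<le>L. h (max j (L - j))) < (\<Sum>j\<le>L. h (max j (Suc L - j)))"
  proof (rule sum_strict_mono_ex1)
    show "\<forall>x\<in>{..L}. h (max x (L - x)) \<le> h (max x (Suc L - x))" using mono' by (auto simp: monoD)
    show "\<exists>a\<in>{..L}. h (max a (L - a)) < h (max a (Suc L - a))"
      by (rule bexI[of _ 0]) (use mono in \<open>auto simp: strict_mono_less\<close>)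
  qed simp
  have b: "h L \<le> h (Suc L)" using mono' by (simp add: monoD)
  have "n - Suc L = Suc (n - Suc (Suc L))" using n by simp
  then have "Fh h n L = (\<Sum>j\<le>L. h (max j (L - j))) + h L + (n - Suc (Suc L)) * h L"
    unfolding Fh_def by simp
  moreover have "Fh h n (Suc L) = (\<Sum>j\<le>L. h (max j (Suc L - j))) + h (Suc L) + (n - Suc (Suc L)) * h (Suc L)"
    unfolding Fh_def by simp
  moreover have "(n - Suc (Suc L)) * h L \<le> (n - Suc (Suc L)) * h (Suc L)" using b by simp
  ultimately show ?thesis using a b by linarith
qed

lemma Fh_mono: fixes h :: "nat \<Rightarrow> nat" and L L' n :: nat assumes "mono h" "L \<le> L'" "L' < n" shows "Fh h n L \<le> Fh h n L'"
  using assms(2,3)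
proof (induction L')
  case 0 then show ?case by simp
next
  case (Suc L')
  show ?case
  proof (cases "L \<le> L'")
    case True
    then have "Fh h n L \<le> Fh h n L'" using Suc by simp
    also have "\<dots> \<le> Fh h n (Suc L')" by (rule Fh_step[OF assms(1)]) (use Suc in simp)
    finally show ?thesis .
  next
    case False then have "L = Suc L'" using Suc by simp
    then show ?thesis by simp
  qed
qed

lemma Fh_strict: fixes h :: "nat \<Rightarrow> nat" and L L' n :: nat assumes "strict_mono h" "L < L'" "L' < n" shows "Fh h n L < Fh h n L'"
  using assms(2,3)
proof (induction L')
  case 0 then show ?case by simp
next
  case (Suc L')
  have st: "Fh h n L' < Fh h n (Suc L')" by (rule Fh_step_strict[OF assms(1)]) (use Suc in simp)
  show ?case
  proof (cases "L < L'")
    case True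
    then have "Fh h n L < Fh h n L'" using Suc by simp
    then show ?thesis using st by simp
  next
    case False then have "L = L'" using Suc by simp
    then show ?thesis using st by simp
  qed
qed

lemma sum_ends: "(\<Sum>j\<le>Suc (Suc D). (ff::nat\<Rightarrow>nat) j) = ff 0 + (\<Sum>j\<le>D. ff (Suc j)) + ff (Suc (Suc D))"
  apply (subst sum.atMost_Suc_shift)
  apply (subst sum.atMost_Suc)
  apply simp
  done

lemma sum_rec2:
  "(\<Sum>j\<le>Suc (Suc D). (h::nat\<Rightarrow>nat) (max j (Suc (Suc D) - j))) = 2 * h (Suc (Suc D)) + (\<Sum>j\<le>D. h (Suc (max j (D - j))))"
proof -
  have "(\<Sum>j\<le>D. h (max (Suc j) (Suc (Suc D) - Suc j))) = (\<Sum>j\<le>D. h (Suc (max j (D - j))))"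
    by (rule sum.cong) (auto simp: Suc_diff_le)
  then show ?thesis using sum_ends[of "\<lambda>j. h (max j (Suc (Suc D) - j))" D] by simp
qed

lemma sum_suc1: "(\<Sum>j\<le>(N::nat). Suc ((x::nat\<Rightarrow>nat) j)) = (\<Sum>j\<le>N. x j) + Suc N"
  by (induction N) auto

lemma sum_suc2: "(\<Sum>j\<le>(N::nat). (Suc ((x::nat\<Rightarrow>nat) j))^2) = (\<Sum>j\<le>N. (x j)^2) + 2 * (\<Sum>j\<le>N. x j) + Suc N"
  by (induction N) (auto simp: power2_eq_square)

lemma T_even: "(\<Sum>j\<le>2*(m::nat). max j (2*m - j)) = 3*m^2 + 2*m"
proof (induction m)
  case 0 then show ?case by simp
next
  case (Suc m)
  have e: "2 * Suc m = Suc (Suc (2*m))" by simp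
  have "(\<Sum>j\<le>2*Suc m. max j (2*Suc m - j)) = 2 * (Suc (Suc (2*m))) + (\<Sum>j\<le>2*m. Suc (max j (2*m - j)))"
    unfolding e using sum_rec2[of "\<lambda>x. x" "2*m"] by simp
  also have "(\<Sum>j\<le>2*m. Suc (max j (2*m - j))) = (\<Sum>j\<le>2*m. max j (2*m - j)) + Suc (2*m)"
    by (rule sum_suc1)
  finally show ?case using Suc by (simp add: power2_eq_square algebra_simps)
qed

lemma S_even: "3 * (\<Sum>j\<le>2*(m::nat). (max j (2*m - j))^2) = 14*m^3 + 12*m^2 + m"
proof (induction m)
  case 0 then show ?case by simp
next
  case (Suc m)
  have e: "2 * Suc m = Suc (Suc (2*m))" by simp
  have "(\<Sum>j\<le>2*Suc m. (max j (2*Suc m - j))^2) = 2 * (Suc (Suc (2*m)))^2 + (\<Sum>j\<le>2*m. (Suc (max j (2*m - j)))^2)"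
    unfolding e using sum_rec2[of "\<lambda>x. x^2" "2*m"] by simp
  also have "(\<Sum>j\<le>2*m. (Suc (max j (2*m - j)))^2) = (\<Sum>j\<le>2*m. (max j (2*m - j))^2) + 2 * (\<Sum>j\<le>2*m. max j (2*m - j)) + Suc (2*m)"
    by (rule sum_suc2)
  finally have "(\<Sum>j\<le>2*Suc m. (max j (2*Suc m - j))^2) = 2 * (Suc (Suc (2*m)))^2 + (\<Sum>j\<le>2*m. (max j (2*m - j))^2) + 2 * (3*m^2 + 2*m) + Suc (2*m)"
    using T_even[of m] by simp
  then show ?case using Suc by (simp add: power2_eq_square power3_eq_cube algebra_simps)
qed




definition pidx :: "'a list \<Rightarrow> 'a \<Rightarrow> nat" where
  "pidx ps u = (THE i. i < length ps \<and> ps!i = u)"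

lemma pidx_nth: "distinct ps \<Longrightarrow> i < length ps \<Longrightarrow> pidx ps (ps!i) = i"
  unfolding pidx_def by (rule the_equality) (auto simp: nth_eq_iff_index_eq)

locale dbroom =
  fixes V :: "'a set" and E :: "'a set set" and ps :: "'a list" and A B :: "'a set"
  assumes fin: "finite V" and psne: "ps \<noteq> []" and dps: "distinct ps"
    and dA: "A \<inter> set ps = {}" and dB: "B \<inter> set ps = {}" and dAB: "A \<inter> B = {}"
    and VV: "V = set ps \<union> A \<union> B"
    and EE: "E = {{ps ! j, ps ! Suc j} | j. Suc j < length ps}
         \<union> {{hd ps, a} | a. a \<in> A} \<union> {{last ps, b} | b. b \<in> B}"
begin

definition "oa = (if A = {} then 0 else 1::nat)"
definition "ob = (if B = {} then 0 else 1::nat)"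
definition "D = oa + (length ps - 1) + ob"
definition "a0 = (SOME a. a \<in> A)"
definition "b0 = (SOME b. b \<in> B)"
definition "c j = (if A \<noteq> {} \<and> j = 0 then a0 else if B \<noteq> {} \<and> j = D then b0 else ps ! (j - oa))"
definition "q u = (if u \<in> A then 0 else if u \<in> B then D else oa + pidx ps u)"

lemma a0: "A \<noteq> {} \<Longrightarrow> a0 \<in> A" unfolding a0_def by (rule someI_ex) blast
lemma b0: "B \<noteq> {} \<Longrightarrow> b0 \<in> B" unfolding b0_def by (rule someI_ex) blast

lemma lenps: "0 < length ps" using psne by simp

lemma len1: "1 \<le> length ps" using psne by (cases ps) auto

lemma D_ge: "A \<noteq> {} \<Longrightarrow> B \<noteq> {} \<Longrightarrow> 2 \<le> D"
  unfolding D_def oa_def ob_def using len1 by simp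

lemma c_ps: assumes "oa \<le> j" "j - oa < length ps" shows "c j = ps ! (j - oa)"
proof -
  have "\<not> (A \<noteq> {} \<and> j = 0)" using assms unfolding oa_def by (auto split: if_splits)
  moreover have "\<not> (B \<noteq> {} \<and> j = D)" using assms unfolding D_def ob_def by auto
  ultimately show ?thesis unfolding c_def by auto
qed

lemma q_ps: "i < length ps \<Longrightarrow> q (ps!i) = oa + i"
proof -
  assume i: "i < length ps"
  have "ps!i \<in> set ps" using i by simp
  then have "ps!i \<notin> A" "ps!i \<notin> B" using dA dB by auto
  then show ?thesis unfolding q_def using pidx_nth[OF dps i] by simp
qed

lemma qc: assumes "j \<le> D" shows "q (c j) = j" and "c j \<in> V"
proof -
  have "q (c j) = j \<and> c j \<in> V"
  proof (cases "A \<noteq> {} \<and> j = 0")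
    case True
    then show ?thesis using a0 unfolding c_def q_def VV by auto
  next
    case F1: False
    show ?thesis
    proof (cases "B \<noteq> {} \<and> j = D")
      case True
      then show ?thesis using b0 F1 dAB unfolding c_def q_def VV by auto
    next
      case False
      have j1: "oa \<le> j" using F1 unfolding oa_def by auto
      have j2: "j - oa < length ps" using False assms len1 unfolding D_def ob_def by (auto split: if_splits)
      have "c j = ps ! (j - oa)" by (rule c_ps[OF j1 j2])
      then show ?thesis using q_ps[OF j2] j1 j2 VV by auto
    qed
  qed
  then show "q (c j) = j" "c j \<in> V" by auto
qed

lemma c_inj: "inj_on c {..D}"
  by (rule inj_on_inverseI[of _ q]) (simp add: qc)

lemma c_img: "c ` {..D} \<subseteq> V" using qc by auto

lemma q_le: "u \<in> V \<Longrightarrow> q u \<le> D"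
proof -
  assume u: "u \<in> V"
  show ?thesis
  proof (cases "u \<in> A \<or> u \<in> B")
    case True then show ?thesis unfolding q_def by auto
  next
    case False
    then have "u \<in> set ps" using u VV by auto
    then obtain i where i: "i < length ps" "u = ps!i" by (auto simp: in_set_conv_nth)
    then show ?thesis using q_ps[OF i(1)] unfolding D_def by simp
  qed
qed

lemma hd_q: "A \<noteq> {} \<Longrightarrow> q (hd ps) = 1"
  using q_ps[OF lenps] psne unfolding oa_def by (simp add: hd_conv_nth)

lemma last_q: "B \<noteq> {} \<Longrightarrow> q (last ps) = D - 1"
  using q_ps[of "length ps - 1"] psne unfolding D_def ob_def by (simp add: last_conv_nth)

lemma q_edge: assumes "{x, y} \<in> E" shows "q x \<le> q y + 1"
proof -
  consider (p) j where "{x,y} = {ps ! j, ps ! Suc j}" "Suc j < length ps"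
    | (a) a where "{x,y} = {hd ps, a}" "a \<in> A" | (b) b where "{x,y} = {last ps, b}" "b \<in> B"
    using assms unfolding EE by blast
  then show ?thesis
  proof cases
    case p
    then have "q x = oa + j \<or> q x = oa + Suc j" "q y = oa + j \<or> q y = oa + Suc j"
      using q_ps[of j] q_ps[of "Suc j"] by (auto simp: doubleton_eq_iff)
    then show ?thesis by auto
  next
    case a
    then have "A \<noteq> {}" by auto
    then have "q x \<le> 1" "q y \<le> 1" using a hd_q unfolding q_def by (auto simp: doubleton_eq_iff)
    then show ?thesis by simp
  next
    case b
    then have B: "B \<noteq> {}" by auto
    have bq: "q b = D" using b dAB unfolding q_def by auto
    have "(x = last ps \<and> y = b) \<or> (x = b \<and> y = last ps)" using b by (auto simp: doubleton_eq_iff)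
    then show ?thesis using last_q[OF B] bq by auto
  qed
qed

lemma walk_q: assumes "walk V E xs" "j < length xs"
  shows "q (xs!0) \<le> q (xs!j) + j \<and> q (xs!j) \<le> q (xs!0) + j"
  using assms(2)
proof (induction j)
  case 0 then show ?case by simp
next
  case (Suc j)
  have e: "{xs!j, xs!Suc j} \<in> E" using walk_edge[OF assms(1)] Suc by simp
  have e': "{xs!Suc j, xs!j} \<in> E" using e by (simp add: insert_commute)
  have "q (xs!j) \<le> q (xs!Suc j) + 1" "q (xs!Suc j) \<le> q (xs!j) + 1"
    using q_edge[OF e] q_edge[OF e'] by auto
  then show ?case using Suc by auto
qed

lemma gdist_q: assumes "wle V E u w m"
  shows "q u \<le> q w + gdist V E u w \<and> q w \<le> q u + gdist V E u w"
proof -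
  obtain xs where xs: "walk V E xs" "hd xs = u" "last xs = w" "length xs = Suc (gdist V E u w)"
    using gdist_ex[OF assms] by blast
  have ne: "xs \<noteq> []" using xs by (simp add: walk_def)
  have "xs!0 = u" using xs ne by (simp add: hd_conv_nth)
  moreover have "xs!(gdist V E u w) = w" using xs ne by (simp add: last_conv_nth)
  ultimately show ?thesis using walk_q[OF xs(1), of "gdist V E u w"] xs(4) by simp
qed

lemma c_edge: assumes "j < D" shows "{c j, c (Suc j)} \<in> E"
proof (cases "A \<noteq> {} \<and> j = 0")
  case True
  have "c 0 = a0" using True unfolding c_def by simp
  moreover have "c 1 = hd ps"
  proof -
    have "oa \<le> 1" "1 - oa < length ps" using True lenps unfolding oa_def by auto
    then show ?thesis using c_ps[of 1] True psne unfolding oa_def by (simp add: hd_conv_nth)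
  qed
  moreover have "{hd ps, a0} \<in> E" using a0 True unfolding EE by blast
  ultimately show ?thesis using True by (simp add: insert_commute)
next
  case F1: False
  then have j1: "oa \<le> j" unfolding oa_def by auto
  show ?thesis
  proof (cases "B \<noteq> {} \<and> Suc j = D")
    case True
    have jl: "j - oa = length ps - 1" using True j1 unfolding D_def ob_def by (auto split: if_splits)
    have "c j = ps ! (j - oa)" by (rule c_ps[OF j1]) (use jl lenps in simp)
    then have "c j = last ps" using jl psne by (simp add: last_conv_nth)
    moreover have "c (Suc j) = b0" using True unfolding c_def by auto
    moreover have "{last ps, b0} \<in> E" using b0 True unfolding EE by blast
    ultimately show ?thesis by simp
  next
    case False
    have jl: "Suc j - oa < length ps" using False assms j1 len1 unfolding D_def ob_def by (auto split: if_splits)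
    have "c j = ps ! (j - oa)" by (rule c_ps[OF j1]) (use jl in simp)
    moreover have "c (Suc j) = ps ! (Suc j - oa)" by (rule c_ps) (use jl j1 in auto)
    moreover have "Suc j - oa = Suc (j - oa)" using j1 by simp
    moreover have "{ps ! (j - oa), ps ! Suc (j - oa)} \<in> E" using jl unfolding EE
      by (auto simp: \<open>Suc j - oa = Suc (j - oa)\<close>)
    ultimately show ?thesis by simp
  qed
qed

lemma c_wle: "i \<le> j \<Longrightarrow> j \<le> D \<Longrightarrow> wle V E (c i) (c j) (j - i)"
proof (induction j)
  case 0 then have "i = 0" by simp
  then show ?case using wle_refl[OF qc(2)[of 0]] by simp
next
  case (Suc j)
  show ?case
  proof (cases "i = Suc j")
    case True then show ?thesis using qc(2)[OF Suc(3)] wle_refl by simp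
  next
    case False
    then have "wle V E (c i) (c j) (j - i)" using Suc by simp
    moreover have "wle V E (c j) (c (Suc j)) 1"
      by (rule wle_edge[OF c_edge]) (use Suc qc in auto)
    ultimately have "wle V E (c i) (c (Suc j)) (j - i + 1)" by (rule wle_trans)
    then show ?thesis using False Suc by (simp add: Suc_diff_le)
  qed
qed

lemma c_wle': "i \<le> D \<Longrightarrow> j \<le> D \<Longrightarrow> wle V E (c i) (c j) (if i \<le> j then j - i else i - j)"
proof (cases "i \<le> j")
  case True
  assume "i \<le> D" "j \<le> D"
  then show ?thesis using c_wle[OF True] True by simp
next
  case False
  assume "i \<le> D" "j \<le> D"
  then have "wle V E (c j) (c i) (i - j)" using c_wle False by simp
  then show ?thesis using wle_sym False by auto
qed

lemma anchor: assumes u: "u \<in> V"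
  shows "\<exists>au du. au \<le> D \<and> wle V E u (c au) du \<and>
     ((du = 0 \<and> au = q u \<and> u \<in> c ` {..D}) \<or> (du = 1 \<and> q u = 0 \<and> au = 1 \<and> A \<noteq> {} \<and> u \<notin> c ` {..D})
      \<or> (du = 1 \<and> q u = D \<and> au = D - 1 \<and> B \<noteq> {} \<and> u \<notin> c ` {..D}))"
proof (cases "u \<in> c ` {..D}")
  case True
  then obtain j where j: "j \<le> D" "u = c j" by auto
  then show ?thesis using qc[OF j(1)] wle_refl by (intro exI[of _ j] exI[of _ 0]) auto
next
  case False
  have "u \<notin> set ps"
  proof
    assume "u \<in> set ps"
    then obtain i where i: "i < length ps" "u = ps!i" by (auto simp: in_set_conv_nth)
    have "oa + i \<le> D" using i unfolding D_def by simp
    moreover have "c (oa + i) = ps!i" using c_ps[of "oa + i"] i by simp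
    ultimately have "c (oa + i) \<in> c ` {..D}" using imageI[of "oa+i" "{..D}" c] by simp
    then show False using False i \<open>c (oa + i) = ps!i\<close> by simp
  qed
  then have "u \<in> A \<or> u \<in> B" using u VV by auto
  then show ?thesis
  proof
    assume uA: "u \<in> A"
    then have Ane: "A \<noteq> {}" by auto
    have "c 1 = hd ps"
    proof -
      have "oa \<le> 1" "1 - oa < length ps" using Ane lenps unfolding oa_def by auto
      then show ?thesis using c_ps[of 1] Ane psne unfolding oa_def by (simp add: hd_conv_nth)
    qed
    moreover have "{hd ps, u} \<in> E" using uA unfolding EE by blast
    moreover have "1 \<le> D" using Ane unfolding D_def oa_def by simp
    moreover have "c 1 \<in> V" using qc(2)[of 1] \<open>1 \<le> D\<close> by simp
    ultimately have "wle V E u (c 1) 1" using wle_edge[of u "c 1" E V] u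
      by (simp add: insert_commute)
    moreover have "q u = 0" using uA unfolding q_def by simp
    ultimately show ?thesis using False Ane \<open>1 \<le> D\<close> by (intro exI[of _ 1] exI[of _ 1]) auto
  next
    assume uB: "u \<in> B"
    then have Bne: "B \<noteq> {}" by auto
    have uA: "u \<notin> A" using uB dAB by auto
    have D1: "1 \<le> D" using Bne unfolding D_def ob_def by simp
    have "c (D - 1) = last ps"
    proof -
      have "oa \<le> D - 1" "D - 1 - oa = length ps - 1" using Bne lenps unfolding D_def ob_def by auto
      then show ?thesis using c_ps[of "D - 1"] psne lenps by (simp add: last_conv_nth)
    qed
    moreover have "{last ps, u} \<in> E" using uB unfolding EE by blast
    moreover have "c (D - 1) \<in> V" using qc(2)[of "D - 1"] by simp
    ultimately have "wle V E u (c (D - 1)) 1" using wle_edge[of u "c (D - 1)" E V] u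
      by (simp add: insert_commute)
    moreover have "q u = D" using uB uA unfolding q_def by simp
    ultimately show ?thesis using False Bne by (intro exI[of _ "D - 1"] exI[of _ 1]) auto
  qed
qed

lemma Vne: "V \<noteq> {}" using VV psne by auto

lemma ecc_lower: "u \<in> V \<Longrightarrow> max (q u) (D - q u) \<le> ecc V E u"
proof -
  assume u: "u \<in> V"
  obtain au du where a: "au \<le> D" "wle V E u (c au) du" using anchor[OF u] by blast
  have w0: "wle V E u (c 0) (du + au)" by (rule wle_mono[OF wle_trans[OF a(2) c_wle'[OF a(1), of 0]]]) auto
  have wD: "wle V E u (c D) (du + (D - au))" by (rule wle_mono[OF wle_trans[OF a(2) c_wle'[OF a(1), of D]]]) (use a(1) in auto)
  have "q u \<le> gdist V E u (c 0)" using gdist_q[OF w0] qc[of 0] by simp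
  moreover have "D - q u \<le> gdist V E u (c D)" using gdist_q[OF wD] qc[of D] by arith
  moreover have "gdist V E u (c 0) \<le> ecc V E u" by (rule ecc_ge[OF fin]) (use qc in simp)
  moreover have "gdist V E u (c D) \<le> ecc V E u" by (rule ecc_ge[OF fin]) (use qc in simp)
  ultimately show ?thesis by simp
qed

lemma dist_upper: assumes u: "u \<in> V" and w: "w \<in> V"
  shows "gdist V E u w \<le> D + 2 \<and> (((A \<noteq> {} \<or> B \<noteq> {}) \<longrightarrow> 2 \<le> D) \<longrightarrow> gdist V E u w \<le> max (q u) (D - q u))"
proof -
  obtain au du where a: "au \<le> D" "wle V E u (c au) du"
     "((du = 0 \<and> au = q u) \<or> (du = 1 \<and> q u = 0 \<and> au = 1 \<and> A \<noteq> {} \<and> u \<notin> c ` {..D})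
      \<or> (du = 1 \<and> q u = D \<and> au = D - 1 \<and> B \<noteq> {} \<and> u \<notin> c ` {..D}))"
    using anchor[OF u] by blast
  obtain aw dw where b: "aw \<le> D" "wle V E w (c aw) dw"
     "((dw = 0 \<and> aw = q w) \<or> (dw = 1 \<and> q w = 0 \<and> aw = 1 \<and> A \<noteq> {} \<and> w \<notin> c ` {..D})
      \<or> (dw = 1 \<and> q w = D \<and> aw = D - 1 \<and> B \<noteq> {} \<and> w \<notin> c ` {..D}))"
    using anchor[OF w] by blast
  have "wle V E u w (du + (if au \<le> aw then aw - au else au - aw) + dw)"
    using wle_trans[OF wle_trans[OF a(2) c_wle'[OF a(1) b(1)]] wle_sym[OF b(2)]] .
  then have g: "gdist V E u w \<le> du + (if au \<le> aw then aw - au else au - aw) + dw" by (rule gdist_le)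
  have qu: "q u \<le> D" "q w \<le> D" using q_le u w by auto
  show ?thesis
  proof
    show "gdist V E u w \<le> D + 2" using g a b by (auto split: if_splits)
    show "((A \<noteq> {} \<or> B \<noteq> {}) \<longrightarrow> 2 \<le> D) \<longrightarrow> gdist V E u w \<le> max (q u) (D - q u)"
    proof
      assume cond: "(A \<noteq> {} \<or> B \<noteq> {}) \<longrightarrow> 2 \<le> D"
      from a(3) b(3) cond g qu show "gdist V E u w \<le> max (q u) (D - q u)"
        by (elim disjE conjE) (auto split: if_splits)
    qed
  qed
qed

lemma ecc_exact:
  assumes cond: "(A \<noteq> {} \<or> B \<noteq> {}) \<longrightarrow> 2 \<le> D" and u: "u \<in> V"
  shows "ecc V E u = max (q u) (D - q u)"
proof (rule antisym)
  show "ecc V E u \<le> max (q u) (D - q u)"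
    by (rule ecc_le[OF fin Vne]) (use dist_upper[OF u] cond in blast)
  show "max (q u) (D - q u) \<le> ecc V E u" by (rule ecc_lower[OF u])
qed

lemma ecc_small: "u \<in> V \<Longrightarrow> ecc V E u \<le> D + 2"
  by (rule ecc_le[OF fin Vne]) (use dist_upper in blast)

lemma noncore_q: "u \<in> V \<Longrightarrow> u \<notin> c ` {..D} \<Longrightarrow> q u = 0 \<or> q u = D"
  using anchor by blast

end




context dbroom begin

definition "cond \<longleftrightarrow> ((A \<noteq> {} \<or> B \<noteq> {}) \<longrightarrow> 2 \<le> D)"

lemma sum_exact: "cond \<Longrightarrow> (\<Sum>u\<in>V. h (ecc V E u)) = Fh h (card V) D"
proof -
  assume cd: cond
  show ?thesis
  proof (rule sum_profile_eq[OF fin c_inj c_img])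
    fix j assume j: "j \<le> D"
    show "ecc V E (c j) = max j (D - j)"
      using ecc_exact[OF cd[unfolded cond_def] qc(2)[OF j]] qc(1)[OF j] by simp
  next
    fix u assume u: "u \<in> V" "u \<notin> c ` {..D}"
    then show "ecc V E u = D" using ecc_exact[OF cd[unfolded cond_def] u(1)] noncore_q[OF u] by auto
  qed
qed

lemma diam_exact: "cond \<Longrightarrow> diameter V E = D"
proof -
  assume cd: cond
  have le: "ecc V E u \<le> D" if "u \<in> V" for u
    using ecc_exact[OF cd[unfolded cond_def] that] q_le[OF that] by simp
  have "ecc V E (c 0) = D" using ecc_exact[OF cd[unfolded cond_def] qc(2)[of 0]] qc(1)[of 0] by simp
  moreover have "c 0 \<in> V" using qc(2)[of 0] by simp
  ultimately have "D \<le> Max (ecc V E ` V)" using fin by (metis Max_ge finite_imageI imageI)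
  moreover have "Max (ecc V E ` V) \<le> D" using le fin Vne by (simp add: Max_le_iff)
  ultimately show ?thesis unfolding diameter_def by simp
qed

lemma diam_small: "diameter V E \<le> D + 2"
  unfolding diameter_def using ecc_small fin Vne by (simp add: Max_le_iff)

lemma not_cond: "\<not> cond \<Longrightarrow> D \<le> 1"
  unfolding cond_def by auto

lemma card_ge: "Suc D \<le> card V"
  using card_inj_on_le[OF c_inj c_img fin] by simp

end

lemma dbroom_path:
  assumes "dbroom V E ps {} {}"
  shows "(\<Sum>u\<in>V. h (ecc V E u)) = Fh h (card V) (length ps - 1)"
proof -
  interpret dbroom V E ps "{}" "{}" by (rule assms)
  have "cond" unfolding cond_def by simp
  moreover have "D = length ps - 1" unfolding D_def oa_def ob_def by simp
  ultimately show ?thesis using sum_exact by simp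
qed

lemma double_broom_dbroom:
  assumes "double_broom V E"
  obtains ps A B where "dbroom V E ps A B"
  using assms unfolding double_broom_def dbroom_def by blast

lemma path_dbroom: assumes "0 < n" shows "dbroom (path_V n) (path_E n) [0..<n] {} {}"
proof -
  have "path_E n = {{[0..<n] ! j, [0..<n] ! Suc j} | j. Suc j < length [0..<n]}"
    unfolding path_E_def by (auto simp del: upt_Suc) (metis Suc_lessD nth_upt add_0)+
  then show ?thesis unfolding dbroom_def path_V_def using assms by auto
qed

lemma card_path: "card (path_V n) = n" unfolding path_V_def by simp

lemma sum_path: "0 < n \<Longrightarrow> (\<Sum>u\<in>path_V n. h (ecc (path_V n) (path_E n) u)) = Fh h n (n - 1)"
  using dbroom_path[OF path_dbroom, of n h] card_path by simp




lemma le_pred_len: "P \<noteq> [] \<Longrightarrow> x \<le> length P - Suc 0 \<Longrightarrow> x < length P"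
  by (cases P) auto

lemma graph_upper:
  assumes conn: "connected_graph V E" and mono: "mono h"
  obtains P where "longest V E P" "(\<Sum>u\<in>V. h (ecc V E u)) \<le> Fh h (card V) (length P - 1)"
    "length P \<le> card V" "1 \<le> length P"
proof -
  have fin: "finite V" and Vne: "V \<noteq> {}" using conn unfolding connected_graph_def simple_graph_def by auto
  obtain P where L: "longest V E P" using longest_exists[OF fin Vne] by blast
  have wP: "walk V E P" and dP: "distinct P" using L unfolding longest_def by auto
  have Pne: "P \<noteq> []" using wP by (simp add: walk_def)
  let ?L = "length P - 1"
  have inj: "inj_on (\<lambda>j. P!j) {..?L}"
  proof (rule inj_onI)
    fix x y assume xy: "x \<in> {..?L}" "y \<in> {..?L}" "P!x = P!y"
    have l0: "0 < length P" using Pne by simp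
    have "x \<le> length P - 1" "y \<le> length P - 1" using xy by auto
    then have "x < length P" "y < length P" using l0 by arith+
    then show "x = y" using xy(3) dP by (simp add: nth_eq_iff_index_eq)
  qed
  have lP: "0 < length P" using Pne by simp
  have img: "(\<lambda>j. P!j) ` {..?L} \<subseteq> V" using walk_nth[OF wP] le_pred_len[OF Pne] by auto
  have "(\<Sum>u\<in>V. h (ecc V E u)) \<le> Fh h (card V) ?L"
  proof (rule sum_profile_le[OF fin inj img mono])
    fix j assume "j \<le> ?L"
    then have "j < length P" using le_pred_len[OF Pne] by simp
    then show "ecc V E (P!j) \<le> max j (?L - j)" using longest_ecc_path[OF L conn] by simp
  next
    fix u assume "u \<in> V" then show "ecc V E u \<le> ?L" by (rule longest_ecc_all[OF L conn])
  qed
  moreover have "length P \<le> card V" by (rule distinct_walk_len[OF fin wP dP])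
  moreover have "1 \<le> length P" using Pne by (cases P) auto
  ultimately show ?thesis using that L by blast
qed

lemma closed0: assumes "2*m < n"
  shows "real (Fh (\<lambda>x. x) n (2*m)) = 2 * real m * real n - (real m)^2"
proof -
  have "Fh (\<lambda>x. x) n (2*m) = (3*m^2 + 2*m) + (n - Suc (2*m)) * (2*m)"
    unfolding Fh_def using T_even[of m] by simp
  then have "real (Fh (\<lambda>x. x) n (2*m)) = (3*real m^2 + 2*real m) + (real n - (2*real m + 1)) * (2*real m)"
    using assms by (simp add: of_nat_diff)
  then show ?thesis by (simp add: algebra_simps power2_eq_square)
qed

lemma closed1: assumes "2*m < n"
  shows "real (Fh (\<lambda>x. x^2) n (2*m)) = f1 n (2*m)"
proof -
  have S: "3 * real (\<Sum>j\<le>2*m. (max j (2*m - j))^2) = 14*real m^3 + 12*real m^2 + real m"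
    using arg_cong[OF S_even[of m], of real] by simp
  have "Fh (\<lambda>x. x^2) n (2*m) = (\<Sum>j\<le>2*m. (max j (2*m - j))^2) + (n - Suc (2*m)) * (2*m)^2"
    unfolding Fh_def by simp
  then have "real (Fh (\<lambda>x. x^2) n (2*m)) = real (\<Sum>j\<le>2*m. (max j (2*m - j))^2) + (real n - (2*real m + 1)) * (2*real m)^2"
    using assms by (simp add: of_nat_diff)
  also have "\<dots> = f1 n (2*m)"
  proof -
    define sm where "sm = real (\<Sum>j\<le>2*m. (max j (2*m - j))^2)"
    have sm: "sm = (14*real m^3 + 12*real m^2 + real m) / 3" using S unfolding sm_def by simp
    have "f1 n (2*m) = real n * (2 * real m)^2 - 5 * (2 * real m) / 12 * ((2 * real m)^2 - 1) - real m / 2"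
      unfolding f1_def eps_d_def by simp
    then show ?thesis unfolding sm_def[symmetric] sm
      by (simp add: field_simps power2_eq_square power3_eq_cube)
  qed
  finally show ?thesis .
qed

lemma f0_even: "0 < n \<Longrightarrow> f0 n (2*m) = (2 * real m * real n - (real m)^2) / real n"
proof -
  assume n: "0 < n"
  have "(2*m)^2 div 4 = m^2" by (simp add: power_mult_distrib)
  then show ?thesis unfolding f0_def using n by (simp add: field_simps)
qed

lemma sigma_h: "sigma i V E = (if i = 0 then real (\<Sum>u\<in>V. ecc V E u) / real (card V)
     else real (\<Sum>u\<in>V. (ecc V E u)^2))"
  unfolding sigma_def sigma0_def sigma1_def by simp




lemma nth_pair_eq:
  assumes "distinct P" "a < length P" "b < length P" "j < length P" "Suc j < length P"
  shows "{P!a, P!b} = {P!j, P!Suc j} \<longleftrightarrow> (a = j \<and> b = Suc j) \<or> (a = Suc j \<and> b = j)"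
  using assms by (auto simp: doubleton_eq_iff nth_eq_iff_index_eq)

lemma path_iso:
  assumes dP: "distinct P" and sP: "set P = V" and lP: "length P = n"
    and EP: "E = {{P!j, P!Suc j} | j. Suc j < length P}"
  shows "graph_iso V E (path_V n) (path_E n)"
  unfolding graph_iso_def
proof (intro exI conjI)
  show bij: "bij_betw (pidx P) V (path_V n)"
  proof (rule bij_betw_imageI)
    show "inj_on (pidx P) V"
    proof (rule inj_onI)
      fix x y assume "x \<in> V" "y \<in> V" "pidx P x = pidx P y"
      then show "x = y" using sP pidx_nth[OF dP] by (auto simp: in_set_conv_nth)
    qed
    show "pidx P ` V = path_V n"
    proof
      show "pidx P ` V \<subseteq> path_V n" using sP pidx_nth[OF dP] lP unfolding path_V_def
        by (auto simp: in_set_conv_nth)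
      show "path_V n \<subseteq> pidx P ` V"
      proof
        fix i assume "i \<in> path_V n"
        then have i: "i < length P" using lP unfolding path_V_def by simp
        then have "pidx P (P!i) = i" by (rule pidx_nth[OF dP])
        moreover have "P!i \<in> V" using i sP by auto
        ultimately show "i \<in> pidx P ` V" by force
      qed
    qed
  qed
  show "\<forall>u\<in>V. \<forall>v\<in>V. ({u, v} \<in> E) = ({pidx P u, pidx P v} \<in> path_E n)"
  proof (intro ballI)
    fix u v assume u: "u \<in> V" and v: "v \<in> V"
    obtain a where a: "a < length P" "u = P!a" using u sP by (auto simp: in_set_conv_nth)
    obtain b where b: "b < length P" "v = P!b" using v sP by (auto simp: in_set_conv_nth)
    have "({u, v} \<in> E) \<longleftrightarrow> (\<exists>j. Suc j < length P \<and> ((a = j \<and> b = Suc j) \<or> (a = Suc j \<and> b = j)))"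
    proof -
      have "({u, v} \<in> E) \<longleftrightarrow> (\<exists>j. {P!a, P!b} = {P!j, P!Suc j} \<and> Suc j < length P)"
        unfolding EP a(2) b(2) by blast
      also have "\<dots> \<longleftrightarrow> (\<exists>j. Suc j < length P \<and> ((a = j \<and> b = Suc j) \<or> (a = Suc j \<and> b = j)))"
      proof
        assume "\<exists>j. {P!a, P!b} = {P!j, P!Suc j} \<and> Suc j < length P"
        then obtain j where j: "{P!a, P!b} = {P!j, P!Suc j}" "Suc j < length P" by blast
        then have "(a = j \<and> b = Suc j) \<or> (a = Suc j \<and> b = j)"
          using nth_pair_eq[OF dP a(1) b(1), of j] by simp
        then show "\<exists>j. Suc j < length P \<and> ((a = j \<and> b = Suc j) \<or> (a = Suc j \<and> b = j))" using j(2) by blast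
      next
        assume "\<exists>j. Suc j < length P \<and> ((a = j \<and> b = Suc j) \<or> (a = Suc j \<and> b = j))"
        then obtain j where j: "Suc j < length P" "(a = j \<and> b = Suc j) \<or> (a = Suc j \<and> b = j)" by blast
        then have "{P!a, P!b} = {P!j, P!Suc j}"
          using nth_pair_eq[OF dP a(1) b(1), of j] by simp
        then show "\<exists>j. {P!a, P!b} = {P!j, P!Suc j} \<and> Suc j < length P" using j(1) by blast
      qed
      finally show ?thesis .
    qed
    moreover have "({pidx P u, pidx P v} \<in> path_E n) \<longleftrightarrow> (\<exists>j. Suc j < length P \<and> ((a = j \<and> b = Suc j) \<or> (a = Suc j \<and> b = j)))"
      unfolding path_E_def a(2) b(2) pidx_nth[OF dP a(1)] pidx_nth[OF dP b(1)] lP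
      by (auto simp: doubleton_eq_iff)
    ultimately show "({u, v} \<in> E) = ({pidx P u, pidx P v} \<in> path_E n)" by simp
  qed
qed

lemma iso_sum:
  assumes conn: "connected_graph V E" and iso: "graph_iso V E (path_V n) (path_E n)" and n: "card V = n"
  shows "(\<Sum>u\<in>V. h (ecc V E u)) = Fh h n (n - 1)"
proof -
  have fin: "finite V" and Vne: "V \<noteq> {}" and sg: "simple_graph V E"
    using conn unfolding connected_graph_def simple_graph_def by auto
  have n0: "0 < n" using fin Vne n by auto
  obtain f where bij: "bij_betw f V {0..<n}" and adj: "\<forall>u\<in>V. \<forall>v\<in>V. {u, v} \<in> E \<longleftrightarrow> {f u, f v} \<in> path_E n"
    using iso unfolding graph_iso_def path_V_def by blast
  define g where "g = inv_into V f"
  have bg: "bij_betw g {0..<n} V" unfolding g_def by (rule bij_betw_inv_into[OF bij])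
  have gV: "g j \<in> V" if "j < n" for j using bg that by (auto simp: bij_betw_def)
  have fg: "f (g j) = j" if "j < n" for j
    unfolding g_def using bij that by (simp add: bij_betw_def f_inv_into_f)
  have gf: "g (f u) = u" if "u \<in> V" for u
    unfolding g_def using bij that by (simp add: bij_betw_def inv_into_f_f)
  have fl: "f u < n" if "u \<in> V" for u using bij that by (auto simp: bij_betw_def)
  define ps where "ps = map g [0..<n]"
  have lps: "length ps = n" unfolding ps_def by simp
  have psn: "ps ! j = g j" if "j < n" for j unfolding ps_def using that by simp
  have dps: "distinct ps" unfolding ps_def using bg by (simp add: distinct_map bij_betw_def)
  have sps: "set ps = V" unfolding ps_def using bg by (simp add: bij_betw_def)
  have EE: "E = {{ps ! j, ps ! Suc j} | j. Suc j < length ps}"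
  proof
    show "E \<subseteq> {{ps ! j, ps ! Suc j} | j. Suc j < length ps}"
    proof
      fix e assume e: "e \<in> E"
      then obtain u v where uv: "e = {u, v}" "u \<in> V" "v \<in> V" using sg unfolding simple_graph_def by blast
      then have "{f u, f v} \<in> path_E n" using adj e by blast
      then obtain j where j: "{f u, f v} = {j, Suc j}" "Suc j < n" unfolding path_E_def by blast
      then have "(f u = j \<and> f v = Suc j) \<or> (f u = Suc j \<and> f v = j)" by (auto simp: doubleton_eq_iff)
      then have "e = {ps ! j, ps ! Suc j}"
        using uv gf[OF uv(2)] gf[OF uv(3)] psn[of j] psn[of "Suc j"] j(2) by (auto simp: insert_commute)
      then show "e \<in> {{ps ! j, ps ! Suc j} | j. Suc j < length ps}" using j(2) lps by blast
    qed
    show "{{ps ! j, ps ! Suc j} | j. Suc j < length ps} \<subseteq> E"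
    proof
      fix e assume "e \<in> {{ps ! j, ps ! Suc j} | j. Suc j < length ps}"
      then obtain j where j: "e = {ps ! j, ps ! Suc j}" "Suc j < n" using lps by blast
      have "{f (g j), f (g (Suc j))} = {j, Suc j}" using fg j(2) by simp
      then have "{f (g j), f (g (Suc j))} \<in> path_E n" using j(2) unfolding path_E_def by blast
      then have "{g j, g (Suc j)} \<in> E" using adj gV j(2) by simp
      then show "e \<in> E" using j psn by simp
    qed
  qed
  have db: "dbroom V E ps {} {}"
    unfolding dbroom_def using fin dps sps EE lps n0 by auto
  show ?thesis using dbroom_path[OF db, of h] n lps by simp
qed




lemma eq_iso:
  assumes conn: "connected_graph V E" and sm: "strict_mono h"
    and eq: "(\<Sum>u\<in>V. h (ecc V E u)) = Fh h (card V) (card V - 1)"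
  shows "graph_iso V E (path_V (card V)) (path_E (card V))"
proof -
  define n where "n = card V"
  have fin: "finite V" and Vne: "V \<noteq> {}" and sg: "simple_graph V E"
    using conn unfolding connected_graph_def simple_graph_def by auto
  have mono: "mono h" using sm by (simp add: strict_mono_mono)
  obtain P where L: "longest V E P" and up: "(\<Sum>u\<in>V. h (ecc V E u)) \<le> Fh h (card V) (length P - 1)"
    and lenle: "length P \<le> card V" and len1: "1 \<le> length P"
    using graph_upper[OF conn mono] by blast
  have wP: "walk V E P" and dP: "distinct P" using L unfolding longest_def by auto
  have lPn: "length P = n"
  proof (rule ccontr)
    assume "length P \<noteq> n"
    then have "length P - 1 < n - 1" using lenle len1 n_def by simp
    then have "Fh h n (length P - 1) < Fh h n (n - 1)" using Fh_strict[OF sm] len1 lenle n_def by simp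
    then show False using up eq n_def by simp
  qed
  have sP: "set P = V"
  proof (rule card_subset_eq[OF fin])
    show "set P \<subseteq> V" using wP by (simp add: walk_def)
    show "card (set P) = card V" using distinct_card[OF dP] lPn n_def by simp
  qed
  have Pne: "P \<noteq> []" using len1 by auto
  have EP: "E = {{P!j, P!Suc j} | j. Suc j < length P}"
  proof
    show "{{P!j, P!Suc j} | j. Suc j < length P} \<subseteq> E" using walk_edge[OF wP] by blast
    show "E \<subseteq> {{P!j, P!Suc j} | j. Suc j < length P}"
    proof
      fix e assume e: "e \<in> E"
      show "e \<in> {{P!j, P!Suc j} | j. Suc j < length P}"
      proof (rule ccontr)
        assume ne: "e \<notin> {{P!j, P!Suc j} | j. Suc j < length P}"
        obtain u v where uv: "e = {u, v}" "u \<noteq> v" "u \<in> V" "v \<in> V" using e sg unfolding simple_graph_def by blast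
        obtain a0 where a0: "a0 < n" "u = P!a0" using uv(3) sP lPn by (auto simp: in_set_conv_nth)
        obtain b0 where b0: "b0 < n" "v = P!b0" using uv(4) sP lPn by (auto simp: in_set_conv_nth)
        have "\<exists>a b. a < b \<and> b < n \<and> e = {P!a, P!b}"
        proof (cases "a0 < b0")
          case True then show ?thesis using a0 b0 uv by blast
        next
          case False
          then have "b0 < a0" using uv a0 b0 by (metis linorder_neqE_nat)
          then show ?thesis using a0 b0 uv by (intro exI[of _ b0] exI[of _ a0]) (auto simp: insert_commute)
        qed
        then obtain a b where ab: "a < b" "b < n" "e = {P!a, P!b}" by blast
        have "b \<noteq> Suc a" using ne ab lPn by blast
        then have ab2: "Suc (Suc a) \<le> b" using ab by simp
        let ?W = "take (Suc a) P @ drop b P"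
        have lt: "last (take (Suc a) P) = P!a" using ab lPn by (simp add: take_Suc_conv_app_nth)
        have hd: "hd (drop b P) = P!b" using ab lPn by (simp add: hd_drop_conv_nth)
        have wW: "walk V E ?W"
          by (rule walk_append[OF walk_take[OF wP] walk_drop[OF wP]]) (use ab lPn lt hd e in auto)
        have hW: "hd ?W = P!0" using Pne by (cases P) auto
        have dne: "drop b P \<noteq> []" using ab lPn by simp
        have "last ?W = last P" using dne ab lPn by (simp add: last_drop)
        then have lW: "last ?W = P!(n - 1)" using Pne lPn by (simp add: last_conv_nth)
        have "length ?W \<le> Suc (n - 2)" using ab ab2 lPn by simp
        then have wle0: "wle V E (P!0) (P!(n - 1)) (n - 2)" using wW hW lW by (intro wleI)
        have n2: "2 \<le> n" using ab ab2 by simp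
        have ecc0: "ecc V E (P!0) \<le> n - 2"
        proof (rule ecc_le[OF fin Vne])
          fix w assume "w \<in> V"
          then obtain m where m: "m < n" "w = P!m" using sP lPn by (auto simp: in_set_conv_nth)
          show "gdist V E (P!0) w \<le> n - 2"
          proof (cases "m = n - 1")
            case True then show ?thesis using gdist_le[OF wle0] m by simp
          next
            case False
            then have "m \<le> n - 2" using m by simp
            moreover have "gdist V E (P!0) (P!m) \<le> m - 0" by (rule gdist_le[OF wle_seg[OF wP]]) (use m lPn in auto)
            ultimately show ?thesis using m by simp
          qed
        qed
        have inj: "inj_on (\<lambda>j. P!j) {..n - 1}"
        proof (rule inj_onI)
          fix x y assume xy: "x \<in> {..n - 1}" "y \<in> {..n - 1}" "P!x = P!y"
          then have "x < length P" "y < length P" using lPn n2 by auto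
          then show "x = y" using xy(3) dP by (simp add: nth_eq_iff_index_eq)
        qed
        have img: "(\<lambda>j. P!j) ` {..n - 1} \<subseteq> V" using sP lPn n2 by auto
        have "(\<Sum>u\<in>V. h (ecc V E u)) < Fh h (card V) (n - 1)"
        proof (rule sum_profile_less[OF fin inj img sm])
          fix j assume "j \<le> n - 1"
          then have "j < length P" using lPn n2 by simp
          then show "ecc V E (P!j) \<le> max j (n - 1 - j)" using longest_ecc_path[OF L conn] lPn by simp
        next
          fix u assume "u \<in> V" then show "ecc V E u \<le> n - 1" using longest_ecc_all[OF L conn] lPn by simp
        next
          show "0 \<le> n - 1" by simp
          show "ecc V E (P!0) < max 0 (n - 1 - 0)" using ecc0 n2 by simp
        qed
        then show False using eq n_def by simp
      qed
    qed
  qed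
  show ?thesis using path_iso[OF dP sP lPn EP] n_def by simp
qed

lemma A_upper:
  assumes conn: "connected_graph V E" and mono: "mono h" and k: "matching_number E = k" and n: "2*k < card V"
  shows "(\<Sum>u\<in>V. h (ecc V E u)) \<le> Fh h (card V) (2*k)"
proof -
  obtain P where L: "longest V E P" and up: "(\<Sum>u\<in>V. h (ecc V E u)) \<le> Fh h (card V) (length P - 1)"
    and lenle: "length P \<le> card V" and len1: "1 \<le> length P"
    using graph_upper[OF conn mono] by blast
  have wP: "walk V E P" and dP: "distinct P" using L unfolding longest_def by auto
  have finE: "finite E" using conn finite_E unfolding connected_graph_def by blast
  have "length P \<le> 2*k + 1"
  proof (rule ccontr)
    assume "\<not> length P \<le> 2*k + 1"
    then have "2 * Suc k \<le> length P" by simp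
    then have "Suc k \<le> matching_number E" by (rule matching_lower[OF wP dP _ finE])
    then show False using k by simp
  qed
  then have "length P - 1 \<le> 2*k" by simp
  then have "Fh h (card V) (length P - 1) \<le> Fh h (card V) (2*k)" using Fh_mono[OF mono _ n] by simp
  then show ?thesis using up by simp
qed

lemma B_upper:
  assumes conn: "connected_graph V E" and mono: "mono h"
  shows "(\<Sum>u\<in>V. h (ecc V E u)) \<le> Fh h (card V) (card V - 1)"
proof -
  obtain P where L: "longest V E P" and up: "(\<Sum>u\<in>V. h (ecc V E u)) \<le> Fh h (card V) (length P - 1)"
    and lenle: "length P \<le> card V" and len1: "1 \<le> length P"
    using graph_upper[OF conn mono] by blast
  have "Fh h (card V) (length P - 1) \<le> Fh h (card V) (card V - 1)"
    by (rule Fh_mono[OF mono]) (use lenle len1 in auto)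
  then show ?thesis using up by simp
qed

lemma DB_eq:
  assumes db: "double_broom V E" and diam: "diameter V E = 2*k" and k: "2 \<le> k"
  shows "(\<Sum>u\<in>V. h (ecc V E u)) = Fh h (card V) (2*k)" and "2*k < card V"
proof -
  obtain ps A B where d: "dbroom V E ps A B" using double_broom_dbroom[OF db] by blast
  interpret dbroom V E ps A B by (rule d)
  have cd: cond
  proof (rule ccontr)
    assume "\<not> cond"
    then have "D \<le> 1" by (rule not_cond)
    then show False using diam_small diam k by simp
  qed
  have "D = 2*k" using diam_exact[OF cd] diam by simp
  then show "(\<Sum>u\<in>V. h (ecc V E u)) = Fh h (card V) (2*k)" using sum_exact[OF cd] by simp
  show "2*k < card V" using card_ge \<open>D = 2*k\<close> by simp
qed

lemma mono_id: "mono (\<lambda>x::nat. x)" by (simp add: mono_def)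
lemma mono_sq: "mono (\<lambda>x::nat. x^2)" by (simp add: mono_def power_mono)
lemma smono_id: "strict_mono (\<lambda>x::nat. x)" by (simp add: strict_mono_def)
lemma smono_sq: "strict_mono (\<lambda>x::nat. x^2)" by (simp add: strict_mono_def power_strict_mono)




theorem theorem5p4:
  fixes V :: "'a set" and E :: "'a set set" and i n k :: nat
  assumes "i \<in> {0, 1}"
    and "connected_graph V E"
    and "card V = n"
    and "matching_number E = k"
  shows "(2 \<le> k \<and> k < n div 2 \<longrightarrow>
            sigma i V E \<le> f i n (2 * k) \<and>
            (\<forall>(V' :: 'b set) E'. double_broom V' E' \<and> card V' = n \<and> diameter V' E' = 2 * k
               \<longrightarrow> sigma i V' E' = f i n (2 * k)))
       \<and> (k = n div 2 \<longrightarrow>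
            sigma i V E \<le> sigma i (path_V n) (path_E n) \<and>
            (sigma i V E = sigma i (path_V n) (path_E n) \<longleftrightarrow> graph_iso V E (path_V n) (path_E n)))"
proof -
  note conn = assms(2)
  have fin: "finite V" and Vne: "V \<noteq> {}" using conn unfolding connected_graph_def simple_graph_def by auto
  have n0: "0 < n" using fin Vne assms(3) by auto
  have nr: "0 < real n" using n0 by simp
  have i: "i = 0 \<or> i = 1" using assms(1) by auto
  have partA: "sigma i V E \<le> f i n (2 * k) \<and>
            (\<forall>(V' :: 'b set) E'. double_broom V' E' \<and> card V' = n \<and> diameter V' E' = 2 * k
               \<longrightarrow> sigma i V' E' = f i n (2 * k))" if kk: "2 \<le> k" "k < n div 2"
  proof
    have kn: "2 * k < card V" using kk assms(3) by linarith
    have kn': "2 * k < n" using kn assms(3) by simp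
    show "sigma i V E \<le> f i n (2 * k)"
      using i
    proof
      assume i0: "i = 0"
      have "(\<Sum>u\<in>V. ecc V E u) \<le> Fh (\<lambda>x. x) n (2*k)"
        using A_upper[OF conn mono_id assms(4) kn] assms(3) by simp
      then have "real (\<Sum>u\<in>V. ecc V E u) \<le> real (Fh (\<lambda>x. x) n (2*k))" by linarith
      then have "real (\<Sum>u\<in>V. ecc V E u) / real n \<le> real (Fh (\<lambda>x. x) n (2*k)) / real n"
        using nr by (simp add: divide_right_mono)
      then show ?thesis using i0 closed0[OF kn'] f0_even[OF n0] assms(3)
        unfolding sigma_h f_def by simp
    next
      assume i1: "i = 1"
      have "(\<Sum>u\<in>V. (ecc V E u)^2) \<le> Fh (\<lambda>x. x^2) n (2*k)"
        using A_upper[OF conn mono_sq assms(4) kn] assms(3) by simp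
      then have "real (\<Sum>u\<in>V. (ecc V E u)^2) \<le> real (Fh (\<lambda>x. x^2) n (2*k))" by linarith
      then show ?thesis using i1 closed1[OF kn'] unfolding sigma_h f_def by simp
    qed
    show "\<forall>(V' :: 'b set) E'. double_broom V' E' \<and> card V' = n \<and> diameter V' E' = 2 * k
               \<longrightarrow> sigma i V' E' = f i n (2 * k)"
    proof (intro allI impI)
      fix V' :: "'b set" and E' assume h: "double_broom V' E' \<and> card V' = n \<and> diameter V' E' = 2 * k"
      have db: "double_broom V' E'" and cV: "card V' = n" and dm: "diameter V' E' = 2 * k" using h by auto
      show "sigma i V' E' = f i n (2 * k)"
        using i
      proof
        assume i0: "i = 0"
        have "(\<Sum>u\<in>V'. ecc V' E' u) = Fh (\<lambda>x. x) n (2*k)"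
          using DB_eq(1)[OF db dm kk(1), of "\<lambda>x. x"] cV by simp
        then show ?thesis using i0 closed0[OF kn'] f0_even[OF n0] cV
          unfolding sigma_h f_def by simp
      next
        assume i1: "i = 1"
        have "(\<Sum>u\<in>V'. (ecc V' E' u)^2) = Fh (\<lambda>x. x^2) n (2*k)"
          using DB_eq(1)[OF db dm kk(1), of "\<lambda>x. x^2"] cV by simp
        then show ?thesis using i1 closed1[OF kn'] unfolding sigma_h f_def by simp
      qed
    qed
  qed
  have partB: "sigma i V E \<le> sigma i (path_V n) (path_E n) \<and>
            (sigma i V E = sigma i (path_V n) (path_E n) \<longleftrightarrow> graph_iso V E (path_V n) (path_E n))"
    using i
  proof
    assume i0: "i = 0"
    have sp: "sigma i (path_V n) (path_E n) = real (Fh (\<lambda>x. x) n (n - 1)) / real n"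
      using sum_path[OF n0, of "\<lambda>x. x"] card_path[of n] i0 unfolding sigma_h by simp
    have sg: "sigma i V E = real (\<Sum>u\<in>V. ecc V E u) / real n" using i0 assms(3) unfolding sigma_h by simp
    have up: "(\<Sum>u\<in>V. ecc V E u) \<le> Fh (\<lambda>x. x) n (n - 1)"
      using B_upper[OF conn mono_id] assms(3) by simp
    have "real (\<Sum>u\<in>V. ecc V E u) \<le> real (Fh (\<lambda>x. x) n (n - 1))" using up by linarith
    then have "real (\<Sum>u\<in>V. ecc V E u) / real n \<le> real (Fh (\<lambda>x. x) n (n - 1)) / real n"
      using nr by (simp add: divide_right_mono)
    then have "sigma i V E \<le> sigma i (path_V n) (path_E n)"
      unfolding sp sg .
    moreover have "sigma i V E = sigma i (path_V n) (path_E n) \<longleftrightarrow> graph_iso V E (path_V n) (path_E n)"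
    proof
      assume "sigma i V E = sigma i (path_V n) (path_E n)"
      then have "real (\<Sum>u\<in>V. ecc V E u) = real (Fh (\<lambda>x. x) n (n - 1))" unfolding sp sg using nr by simp
      then have "(\<Sum>u\<in>V. ecc V E u) = Fh (\<lambda>x. x) n (n - 1)" by (simp only: of_nat_eq_iff)
      then have "(\<Sum>u\<in>V. ecc V E u) = Fh (\<lambda>x. x) (card V) (card V - 1)" using assms(3) by simp
      then show "graph_iso V E (path_V n) (path_E n)" using eq_iso[OF conn smono_id] assms(3) by simp
    next
      assume iso: "graph_iso V E (path_V n) (path_E n)"
      have "(\<Sum>u\<in>V. ecc V E u) = Fh (\<lambda>x. x) n (n - 1)" using iso_sum[OF conn iso assms(3), of "\<lambda>x. x"] by simp
      then show "sigma i V E = sigma i (path_V n) (path_E n)" unfolding sp sg by simp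
    qed
    ultimately show ?thesis by blast
  next
    assume i1: "i = 1"
    have sp: "sigma i (path_V n) (path_E n) = real (Fh (\<lambda>x. x^2) n (n - 1))"
      using sum_path[OF n0, of "\<lambda>x. x^2"] i1 unfolding sigma_h by simp
    have sg: "sigma i V E = real (\<Sum>u\<in>V. (ecc V E u)^2)" using i1 unfolding sigma_h by simp
    have up: "(\<Sum>u\<in>V. (ecc V E u)^2) \<le> Fh (\<lambda>x. x^2) n (n - 1)"
      using B_upper[OF conn mono_sq] assms(3) by simp
    have "real (\<Sum>u\<in>V. (ecc V E u)^2) \<le> real (Fh (\<lambda>x. x^2) n (n - 1))" using up by (simp only: of_nat_le_iff)
    then have "sigma i V E \<le> sigma i (path_V n) (path_E n)"
      unfolding sp sg .
    moreover have "sigma i V E = sigma i (path_V n) (path_E n) \<longleftrightarrow> graph_iso V E (path_V n) (path_E n)"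
    proof
      assume "sigma i V E = sigma i (path_V n) (path_E n)"
      then have "real (\<Sum>u\<in>V. (ecc V E u)^2) = real (Fh (\<lambda>x. x^2) n (n - 1))" unfolding sp sg .
      then have "(\<Sum>u\<in>V. (ecc V E u)^2) = Fh (\<lambda>x. x^2) n (n - 1)" by (simp only: of_nat_eq_iff)
      then have "(\<Sum>u\<in>V. (ecc V E u)^2) = Fh (\<lambda>x. x^2) (card V) (card V - 1)" using assms(3) by simp
      then show "graph_iso V E (path_V n) (path_E n)" using eq_iso[OF conn smono_sq] assms(3) by simp
    next
      assume iso: "graph_iso V E (path_V n) (path_E n)"
      have "(\<Sum>u\<in>V. (ecc V E u)^2) = Fh (\<lambda>x. x^2) n (n - 1)" using iso_sum[OF conn iso assms(3), of "\<lambda>x. x^2"] by simp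
      then show "sigma i V E = sigma i (path_V n) (path_E n)" unfolding sp sg by simp
    qed
    ultimately show ?thesis by blast
  qed
  show ?thesis using partA partB by blast
qed



end
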